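(* Let $M_1 \in \mathbb{Z}^{m\times m}$ be nonsingular, $M_2 \in \mathbb{Z}^{\ell_2 \times m}$, $F \in \mathbb{Z}^{n\times m}$, and let $(S,W)$ be a Smith massager for $M_1$. Then $$\mathcal{R}\left(\begin{bmatrix} M_1 \\ M_2 \end{bmatrix}, F\right) = \mathcal{R}\left(\begin{bmatrix} S \\ \mathrm{colmod}(M_2W,S)\end{bmatrix}, \mathrm{colmod}(FW,S)\right).$$
   Context: For an integer matrix $A$, $\mathcal{L}(A)$ denotes the lattice of all $\mathbb{Z}$-linear combinations of the rows of $A$. For $M \in \mathbb{Z}^{\ell \times m}$ of full column rank and $F \in \mathbb{Z}^{n \times m}$, the integer relations lattice is $\mathcal{R}(M,F) := \{p \in \mathbb{Z}^{1\times n} : pF \in \mathcal{L}(M)\}$. For a diagonal $S \in \mathbb{Z}_{\ge 0}^{m\times m}$ with positive diagonal and $A$ with $m$ columns, $\mathrm{colmod}(A,S)$ is the matrix obtained from $A$ by replacing each entry in column $j$ by its residue in $\{0,\dots,S_{jj}-1\}$ modulo $S_{jj}$. "$A \equiv B \bmod S$" means every row of $A-B$ lies in $\mathcal{L}(S)$. A Smith form is a diagonal matrix $\mathrm{diag}(s_1,\dots,s_m)$ with nonnegative integer entries and $s_i \mid s_{i+1}$; the Smith form of a nonsingular $M$ is the unique such matrix $UMV$ with $U,V$ unimodular. If $M \in \mathbb{Z}^{m\times m}$ is nonsingular with Smith form $S$, a pair $(S,W)$ with $W \in \mathbb{Z}^{m\times m}$ is a Smith massager for $M$ if (i) $MW \equiv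 0 \bmod S$ and (ii) there exists $Z \in \mathbb{Z}^{m\times m}$ with $ZW \equiv I_m \bmod S$. *)

theory Defs
  imports "Jordan_Normal_Form.Determinant"
begin

text \<open>A row vector p in Z^(1 x n) is an int vec of dimension n;
 the product pF is (transpose_mat F) *v p.\<close>

definition row_lattice :: "int mat \<Rightarrow> int vec set" where
  "row_lattice A = {v. \<exists>c :: int vec. dim_vec c = dim_row A \<and> v = transpose_mat A *\<^sub>v c}"

definition relations_lattice :: "int mat \<Rightarrow> int mat \<Rightarrow> int vec set" where
  "relations_lattice M F = {p. dim_vec p = dim_row F \<and> transpose_mat F *\<^sub>v p \<in> row_lattice M}"

definition stack_mat :: "int mat \<Rightarrow> int mat \<Rightarrow> int mat" where
  "stack_mat A B = mat (dim_row A + dim_row B) (dim_col A)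
     (\<lambda>(i,j). if i < dim_row A then A $$ (i,j) else B $$ (i - dim_row A, j))"

definition colmod :: "int mat \<Rightarrow> int mat \<Rightarrow> int mat" where
  "colmod A S = mat (dim_row A) (dim_col A) (\<lambda>(i,j). A $$ (i,j) mod S $$ (j,j))"

definition cong_mod_mat :: "int mat \<Rightarrow> int mat \<Rightarrow> int mat \<Rightarrow> bool" where
  "cong_mod_mat A B S = (\<forall>i < dim_row A. row (A - B) i \<in> row_lattice S)"

definition smith_form :: "int mat \<Rightarrow> bool" where
  "smith_form S = (square_mat S \<and> diagonal_mat S \<and>
     (\<forall>i < dim_row S. S $$ (i,i) \<ge> 0) \<and>
     (\<forall>i. i + 1 < dim_row S \<longrightarrow> S $$ (i,i) dvd S $$ (i+1,i+1)))"

definition unimodular :: "nat \<Rightarrow> int mat \<Rightarrow> bool" where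
  "unimodular m U = (U \<in> carrier_mat m m \<and> (det U = 1 \<or> det U = -1))"

definition is_smith_form_of :: "int mat \<Rightarrow> int mat \<Rightarrow> bool" where
  "is_smith_form_of S M = (\<exists>m. M \<in> carrier_mat m m \<and> S \<in> carrier_mat m m \<and> smith_form S \<and>
     (\<exists>U V. unimodular m U \<and> unimodular m V \<and> S = U * M * V))"

definition smith_massager :: "int mat \<Rightarrow> int mat \<Rightarrow> int mat \<Rightarrow> bool" where
  "smith_massager M S W = (\<exists>m. M \<in> carrier_mat m m \<and> det M \<noteq> 0 \<and>
     is_smith_form_of S M \<and> W \<in> carrier_mat m m \<and>
     cong_mod_mat (M * W) (0\<^sub>m m m) S \<and>
     (\<exists>Z \<in> carrier_mat m m. cong_mod_mat (Z * W) (1\<^sub>m m) S))"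

end

theory Submission
  imports Defs
begin

definition vm :: "int vec \<Rightarrow> int mat \<Rightarrow> int vec" where
  "vm c B = transpose_mat B *\<^sub>v c"

lemma vm_dim[simp]: "dim_vec (vm c B) = dim_col B"
  by (simp add: vm_def)

lemma vm_index: "dim_vec c = dim_row B \<Longrightarrow> j < dim_col B \<Longrightarrow>
   vm c B $ j = (\<Sum>i<dim_row B. c$i * B$$(i,j))"
  unfolding vm_def
  by (auto simp: mult_mat_vec_def scalar_prod_def atLeast0LessThan intro!: sum.cong)

lemma vm_mult: "B \<in> carrier_mat k l \<Longrightarrow> C \<in> carrier_mat l r \<Longrightarrow> dim_vec c = k \<Longrightarrow>
   vm c (B*C) = vm (vm c B) C"
  unfolding vm_def by (subst transpose_mult, auto)

lemma vm_cong:
  assumes T: "T \<in> carrier_mat k m" and x: "dim_vec x = k" and y: "dim_vec y = k"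
    and ST: "\<forall>i<k. \<forall>j<m. s j dvd t i * T$$(i,j)"
    and xy: "\<forall>i<k. t i dvd x$i - y$i" and j: "j < m"
  shows "s j dvd vm x T $ j - vm y T $ j"
proof -
  have "vm x T $ j - vm y T $ j = (\<Sum>i<k. (x$i - y$i) * T$$(i,j))"
    using T x y j by (simp add: vm_index sum_subtractf[symmetric] algebra_simps)
  also have "s j dvd \<dots>"
  proof (rule dvd_sum)
    fix i assume "i \<in> {..<k}"
    then have i: "i < k" by simp
    from xy i obtain q where "x$i - y$i = t i * q" by (meson dvdE)
    then have eq: "(x$i - y$i) * T$$(i,j) = q * (t i * T$$(i,j))" by simp
    have "s j dvd q * (t i * T$$(i,j))" using ST i j by (simp add: dvd_mult)
    then show "s j dvd (x$i - y$i) * T$$(i,j)" using eq by metis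
  qed
  finally show ?thesis .
qed

lemma pigeon:
  fixes s :: "nat \<Rightarrow> int" and T A w :: "_"
  assumes pos: "\<forall>j<m. s j > 0" and T: "T \<in> carrier_mat m m" and A: "A \<in> carrier_mat m m"
    and ST: "\<forall>i<m. \<forall>j<m. s j dvd s i * T$$(i,j)"
    and AT: "\<forall>i<m. \<forall>j<m. s j dvd (A*T)$$(i,j) - (if i = j then 1 else 0)"
    and w: "dim_vec w = m" and wT: "\<forall>j<m. s j dvd vm w T $ j"
  shows "\<forall>j<m. s j dvd w$j"
proof -
  define red where "red x = vec m (\<lambda>j. x$j mod s j)" for x :: "int vec"
  define G where "G = {x :: int vec. dim_vec x = m \<and> (\<forall>j<m. 0 \<le> x$j \<and> x$j < s j)}"
  define f where "f x = red (vm x T)" for x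
  have redeq: "red x = red y \<longleftrightarrow> (\<forall>j<m. s j dvd x$j - y$j)" for x y
    unfolding red_def by (auto simp: vec_eq_iff mod_eq_dvd_iff)
  have red_G: "red x \<in> G" for x
    using pos unfolding red_def G_def by auto
  have red_id: "x \<in> G \<Longrightarrow> red x = x" for x
    unfolding red_def G_def by (auto simp: vec_eq_iff)
  have red_dim[simp]: "dim_vec (red x) = m" for x unfolding red_def by simp
  have red_cong: "\<forall>j<m. s j dvd red x $ j - x $ j" for x
    unfolding red_def by (auto simp: mod_eq_dvd_iff[symmetric])
  have f_red: "dim_vec x = m \<Longrightarrow> f (red x) = f x" for x
    unfolding f_def redeq using vm_cong[OF T _ _ ST red_cong] by auto
  have fG: "f ` G \<subseteq> G" unfolding f_def using red_G by auto
  have Gf: "G \<subseteq> f ` G"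
  proof
    fix g assume g: "g \<in> G"
    then have gd: "dim_vec g = m" unfolding G_def by auto
    have "f (red (vm g A)) = f (vm g A)" using A by (intro f_red) auto
    also have "\<dots> = red (vm g (A*T))" unfolding f_def using A T gd by (simp add: vm_mult)
    also have "\<dots> = red g"
      unfolding redeq
    proof (intro allI impI)
      fix j assume j: "j < m"
      have "g $ j = (\<Sum>i<m. g$i * (if i = j then 1 else 0))" using j by (simp add: if_distrib cong: if_cong)
      then have "vm g (A*T) $ j - g$j = (\<Sum>i<m. g$i * ((A*T)$$(i,j) - (if i = j then 1 else 0)))"
        using A T gd j by (simp add: vm_index sum_subtractf[symmetric] algebra_simps)
      also have "s j dvd \<dots>" using AT j by (intro dvd_sum) auto
      finally show "s j dvd vm g (A*T) $ j - g$j" .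
    qed
    also have "\<dots> = g" using red_id g by simp
    finally show "g \<in> f ` G" using red_G by (metis image_eqI)
  qed
  have finG: "finite G"
  proof (rule finite_subset)
    show "G \<subseteq> (\<lambda>h. vec m h) ` (PiE {..<m} (\<lambda>j. {0..<s j}))"
    proof
      fix x assume x: "x \<in> G"
      have "x = vec m (restrict (\<lambda>j. x$j) {..<m})" using x unfolding G_def by (auto simp: vec_eq_iff)
      moreover have "restrict (\<lambda>j. x$j) {..<m} \<in> PiE {..<m} (\<lambda>j. {0..<s j})" using x unfolding G_def by auto
      ultimately show "x \<in> (\<lambda>h. vec m h) ` (PiE {..<m} (\<lambda>j. {0..<s j}))" by blast
    qed
  qed (auto intro: finite_PiE)
  have inj: "inj_on f G"
    using finG fG Gf by (intro eq_card_imp_inj_on) (auto simp: subset_antisym)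
  have z: "0\<^sub>v m \<in> G" unfolding G_def using pos by auto
  have vz: "vm (0\<^sub>v m) T = 0\<^sub>v m" using T by (auto simp: vec_eq_iff vm_index)
  have "f (red w) = f (0\<^sub>v m)"
    unfolding f_red[OF w] unfolding f_def vz redeq using wT T by auto
  then have "red w = 0\<^sub>v m" using inj red_G z by (meson inj_on_def)
  then show ?thesis using redeq[of w "0\<^sub>v m"] red_id[OF z] by auto
qed


lemma row_lattice_vm: "v \<in> row_lattice A \<longleftrightarrow> (\<exists>c. dim_vec c = dim_row A \<and> v = vm c A)"
  unfolding row_lattice_def vm_def by simp

lemma vm_one: "dim_vec v = m \<Longrightarrow> vm v (1\<^sub>m m) = v"
  unfolding vm_def by (intro eq_vecI) auto

lemma vm_zero: "dim_vec v = k \<Longrightarrow> B \<in> carrier_mat k m \<Longrightarrow> (\<forall>i<k. s dvd B$$(i,j)) \<Longrightarrow> j < m \<Longrightarrow> s dvd vm v B $ j"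
  by (auto simp: vm_index intro!: dvd_sum)

lemma vm_diff_mat: "dim_vec v = k \<Longrightarrow> B \<in> carrier_mat k m \<Longrightarrow> B' \<in> carrier_mat k m \<Longrightarrow>
   (\<forall>i<k. s dvd B$$(i,j) - B'$$(i,j)) \<Longrightarrow> j < m \<Longrightarrow> s dvd vm v B $ j - vm v B' $ j"
proof -
  assume a: "dim_vec v = k" "B \<in> carrier_mat k m" "B' \<in> carrier_mat k m"
     "\<forall>i<k. s dvd B$$(i,j) - B'$$(i,j)" "j < m"
  then have "vm v B $ j - vm v B' $ j = (\<Sum>i<k. v$i * (B$$(i,j) - B'$$(i,j)))"
    by (simp add: vm_index sum_subtractf[symmetric] algebra_simps)
  also have "s dvd \<dots>" using a by (auto intro!: dvd_sum)
  finally show ?thesis .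
qed

lemma vm_diff_vec: "dim_vec x = k \<Longrightarrow> dim_vec y = k \<Longrightarrow> B \<in> carrier_mat k m \<Longrightarrow>
   vm (x - y) B = vm x B - vm y B"
  by (intro eq_vecI) (auto simp: vm_index sum_subtractf[symmetric] algebra_simps)

lemma diag_lattice:
  assumes S: "S \<in> carrier_mat m m" and D: "diagonal_mat S"
  shows "v \<in> row_lattice S \<longleftrightarrow> dim_vec v = m \<and> (\<forall>j<m. S$$(j,j) dvd v$j)"
proof -
  have vmS: "vm c S $ j = c$j * S$$(j,j)" if "dim_vec c = m" "j < m" for c j
  proof -
    have "vm c S $ j = (\<Sum>i<m. c$i * S$$(i,j))" using that S by (simp add: vm_index)
    also have "\<dots> = (\<Sum>i<m. if i = j then c$j * S$$(j,j) else 0)"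
      using D S that unfolding diagonal_mat_def by (intro sum.cong) auto
    also have "\<dots> = c$j * S$$(j,j)" using that by simp
    finally show ?thesis .
  qed
  show ?thesis
  proof
    assume "v \<in> row_lattice S"
    then obtain c where c: "dim_vec c = m" "v = vm c S" using S unfolding row_lattice_vm by auto
    then show "dim_vec v = m \<and> (\<forall>j<m. S$$(j,j) dvd v$j)" using S vmS by auto
  next
    assume v: "dim_vec v = m \<and> (\<forall>j<m. S$$(j,j) dvd v$j)"
    define c where "c = vec m (\<lambda>j. v$j div S$$(j,j))"
    have "v = vm c S" using v S by (intro eq_vecI) (auto simp: vmS c_def)
    moreover have "dim_vec c = m" by (simp add: c_def)
    ultimately show "v \<in> row_lattice S" unfolding row_lattice_vm using S by auto
  qed
qed

lemma cong_mod_char: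
  assumes S: "S \<in> carrier_mat m m" and D: "diagonal_mat S"
    and A: "A \<in> carrier_mat k m" and B: "B \<in> carrier_mat k m"
  shows "cong_mod_mat A B S \<longleftrightarrow> (\<forall>i<k. \<forall>j<m. S$$(j,j) dvd A$$(i,j) - B$$(i,j))"
  unfolding cong_mod_mat_def diag_lattice[OF S D] using A B by auto

lemma sum_split_add: "(\<Sum>i<a+b. f i) = (\<Sum>i<a. f i) + (\<Sum>i<b. f (a+i))"
  for f :: "nat \<Rightarrow> int"
  by (induction b) (simp_all add: add.assoc)

lemma stack_lattice:
  assumes A: "A \<in> carrier_mat ka m" and B: "B \<in> carrier_mat kb m"
  shows "x \<in> row_lattice (stack_mat A B) \<longleftrightarrow>
     (\<exists>a b. dim_vec a = ka \<and> dim_vec b = kb \<and> x = vm a A + vm b B)"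
proof -
  have SC: "stack_mat A B \<in> carrier_mat (ka+kb) m" using A B unfolding stack_mat_def by auto
  have comp: "vm c (stack_mat A B) $ j = (\<Sum>i<ka. c$i * A$$(i,j)) + (\<Sum>i<kb. c$(ka+i) * B$$(i,j))"
    if "dim_vec c = ka + kb" "j < m" for c j
  proof -
    have "vm c (stack_mat A B) $ j = (\<Sum>i<ka+kb. c$i * stack_mat A B $$(i,j))"
      using that SC by (simp add: vm_index)
    also have "\<dots> = (\<Sum>i<ka. c$i * stack_mat A B $$(i,j)) + (\<Sum>i<kb. c$(ka+i) * stack_mat A B $$(ka+i,j))"
      by (rule sum_split_add)
    also have "\<dots> = (\<Sum>i<ka. c$i * A$$(i,j)) + (\<Sum>i<kb. c$(ka+i) * B$$(i,j))"
      using A B that unfolding stack_mat_def by (auto intro!: sum.cong)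
    finally show ?thesis .
  qed
  show ?thesis
  proof
    assume "x \<in> row_lattice (stack_mat A B)"
    then obtain c where c: "dim_vec c = ka + kb" "x = vm c (stack_mat A B)"
      using SC unfolding row_lattice_vm by auto
    define a where "a = vec ka (\<lambda>i. c$i)"
    define b where "b = vec kb (\<lambda>i. c$(ka+i))"
    have "x = vm a A + vm b B"
    proof (rule eq_vecI)
      fix j assume "j < dim_vec (vm a A + vm b B)"
      then have j: "j < m" using B by simp
      show "x $ j = (vm a A + vm b B) $ j" unfolding c(2) comp[OF c(1) j]
        using j A B by (simp add: vm_index a_def b_def)
    qed (use c A B SC in simp)
    moreover have "dim_vec a = ka" "dim_vec b = kb" unfolding a_def b_def by auto
    ultimately show "\<exists>a b. dim_vec a = ka \<and> dim_vec b = kb \<and> x = vm a A + vm b B"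
      by blast
  next
    assume "\<exists>a b. dim_vec a = ka \<and> dim_vec b = kb \<and> x = vm a A + vm b B"
    then obtain a b where ab: "dim_vec a = ka" "dim_vec b = kb" "x = vm a A + vm b B" by auto
    define c where "c = vec (ka+kb) (\<lambda>i. if i < ka then a$i else b$(i-ka))"
    have dc: "dim_vec c = ka + kb" unfolding c_def by simp
    have "x = vm c (stack_mat A B)"
    proof (rule eq_vecI)
      fix j assume "j < dim_vec (vm c (stack_mat A B))"
      then have j: "j < m" using SC by simp
      show "x $ j = vm c (stack_mat A B) $ j" unfolding comp[OF dc j]
        using j A B ab by (simp add: vm_index c_def)
    qed (use ab A B SC in simp)
    then show "x \<in> row_lattice (stack_mat A B)" unfolding row_lattice_vm using SC dc by auto
  qed
qed

lemma unimod_inv: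
  assumes "unimodular m U"
  shows "\<exists>Ui \<in> carrier_mat m m. U * Ui = 1\<^sub>m m \<and> Ui * U = 1\<^sub>m m"
proof -
  have U: "U \<in> carrier_mat m m" and d: "det U * det U = 1" using assms unfolding unimodular_def by auto
  define Ui where "Ui = det U \<cdot>\<^sub>m adj_mat U"
  have Ui: "Ui \<in> carrier_mat m m" unfolding Ui_def using adj_mat(1)[OF U] by simp
  have "U * Ui = det U \<cdot>\<^sub>m (det U \<cdot>\<^sub>m 1\<^sub>m m)" unfolding Ui_def
    using mult_smult_distrib[OF U adj_mat(1)[OF U]] adj_mat(2)[OF U] by simp
  also have "\<dots> = 1\<^sub>m m" using d by (intro eq_matI) auto
  finally have 1: "U * Ui = 1\<^sub>m m" .
  have "Ui * U = det U \<cdot>\<^sub>m (det U \<cdot>\<^sub>m 1\<^sub>m m)" unfolding Ui_def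
    using mult_smult_assoc_mat[OF adj_mat(1)[OF U] U] adj_mat(3)[OF U] by simp
  also have "\<dots> = 1\<^sub>m m" using d by (intro eq_matI) auto
  finally show ?thesis using 1 Ui by auto
qed


lemma mat_dvd_entry:
  fixes s :: int
  assumes U: "U \<in> carrier_mat k l" and B: "B \<in> carrier_mat l m" and i: "i < k" and j: "j < m"
    and d: "\<forall>r<l. s dvd B$$(r,j)"
  shows "s dvd (U*B)$$(i,j)"
  using U B i j d apply (simp add: scalar_prod_def)
  apply (intro dvd_sum dvd_mult)
  apply auto
  done

lemma diag_mult_entry:
  assumes S: "S \<in> carrier_mat m m" and D: "diagonal_mat S" and T: "T \<in> carrier_mat m k"
    and i: "i < m" and j: "j < k"
  shows "(S*T)$$(i,j) = S$$(i,i) * T$$(i,j)"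
proof -
  have "(S*T)$$(i,j) = (\<Sum>r\<in>{0..<m}. S$$(i,r) * T$$(r,j))"
    using S T i j by (simp add: scalar_prod_def)
  also have "\<dots> = (\<Sum>r\<in>{0..<m}. if r = i then S$$(i,i) * T$$(i,j) else 0)"
    using D S i unfolding diagonal_mat_def by (intro sum.cong) auto
  also have "\<dots> = S$$(i,i) * T$$(i,j)" using i by simp
  finally show ?thesis .
qed

lemma key:
  assumes M1: "M1 \<in> carrier_mat m m" and S: "S \<in> carrier_mat m m" and D: "diagonal_mat S"
    and pos: "\<forall>j<m. S$$(j,j) > 0"
    and U: "U \<in> carrier_mat m m" and Ui: "Ui \<in> carrier_mat m m" and UiU: "Ui * U = 1\<^sub>m m"
    and V: "V \<in> carrier_mat m m" and Vi: "Vi \<in> carrier_mat m m"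
    and VVi: "V * Vi = 1\<^sub>m m"
    and SUMV: "S = U * M1 * V"
    and W: "W \<in> carrier_mat m m" and MW: "\<forall>i<m. \<forall>j<m. S$$(j,j) dvd (M1*W)$$(i,j)"
    and Z: "Z \<in> carrier_mat m m"
    and ZW: "\<forall>i<m. \<forall>j<m. S$$(j,j) dvd (Z*W)$$(i,j) - (if i = j then 1 else 0)"
    and v: "dim_vec v = m"
  shows "v \<in> row_lattice M1 \<longleftrightarrow> (\<forall>j<m. S$$(j,j) dvd vm v W $ j)"
proof -
  let ?s = "\<lambda>j. S$$(j,j)"
  note L = diag_lattice[OF S D]
  have MV: "M1 * V = Ui * S"
  proof -
    have "Ui * S = Ui * (U * (M1 * V))" using SUMV U M1 V by simp
    also have "\<dots> = (Ui * U) * (M1 * V)" using assoc_mult_mat[OF Ui U, of "M1 * V" m] M1 V by simp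
    also have "\<dots> = M1 * V" unfolding UiU using M1 V by simp
    finally show ?thesis by simp
  qed
  have SVi: "S * Vi = U * M1"
  proof -
    have "S * Vi = (U * M1) * (V * Vi)" unfolding SUMV by (rule assoc_mult_mat[OF mult_carrier_mat[OF U M1] V Vi])
    then show ?thesis unfolding VVi using U M1 by simp
  qed
  have step1: "v \<in> row_lattice M1 \<longleftrightarrow> vm v V \<in> row_lattice S"
  proof
    assume "v \<in> row_lattice M1"
    then obtain c where c: "dim_vec c = m" "v = vm c M1" using M1 unfolding row_lattice_vm by auto
    have "vm v V = vm c (M1 * V)" using c M1 V by (simp add: vm_mult)
    also have "\<dots> = vm (vm c Ui) S" unfolding MV using c Ui S by (simp add: vm_mult)
    finally show "vm v V \<in> row_lattice S" unfolding row_lattice_vm using Ui S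
      by (intro exI[of _ "vm c Ui"]) auto
  next
    assume "vm v V \<in> row_lattice S"
    then obtain c where c: "dim_vec c = m" "vm v V = vm c S" using S unfolding row_lattice_vm by auto
    have "v = vm v (V * Vi)" using VVi v by (simp add: vm_one)
    also have "\<dots> = vm (vm c S) Vi" using v V Vi c by (simp add: vm_mult)
    also have "\<dots> = vm c (U * M1)" by (metis vm_mult[OF S Vi c(1)] SVi)
    also have "\<dots> = vm (vm c U) M1" using c U M1 by (simp add: vm_mult)
    finally show "v \<in> row_lattice M1" unfolding row_lattice_vm using U M1
      by (intro exI[of _ "vm c U"]) auto
  qed
  define T where "T = Vi * W"
  have T: "T \<in> carrier_mat m m" unfolding T_def using Vi W by simp
  have VT: "V * T = W" unfolding T_def using assoc_mult_mat[OF V Vi W] VVi W by simp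
  have vW: "vm v W = vm (vm v V) T" using v V T VT by (metis vm_mult)
  have ST: "S * T = U * (M1 * W)"
  proof -
    have "S * T = (S * Vi) * W" unfolding T_def using S Vi W by simp
    then show ?thesis using SVi U M1 W by simp
  qed
  have UMW: "?s j dvd (U * (M1 * W))$$(i,j)" if "i < m" "j < m" for i j
    using mat_dvd_entry[OF U _ that] M1 W MW that by auto
  have STd: "?s j dvd ?s i * T$$(i,j)" if "i < m" "j < m" for i j
    using UMW[OF that] diag_mult_entry[OF S D T that] ST by simp
  have AT: "(Z * V) * T = Z * W" using Z V T VT by simp
  have "vm v V \<in> row_lattice S \<longleftrightarrow> (\<forall>j<m. ?s j dvd vm (vm v V) T $ j)"
  proof
    assume "vm v V \<in> row_lattice S"
    then obtain c where c: "dim_vec c = m" "vm v V = vm c S" using S unfolding row_lattice_vm by auto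
    have "vm (vm c S) T = vm c (S*T)" by (rule vm_mult[OF S T c(1), symmetric])
    also have "\<dots> = vm (vm c U) (M1 * W)" unfolding ST by (rule vm_mult[OF U mult_carrier_mat[OF M1 W] c(1)])
    finally have "vm (vm v V) T = vm (vm c U) (M1 * W)" unfolding c(2) .
    note eq = this
    have d: "dim_vec (vm c U) = m" using U by simp
    show "\<forall>j<m. ?s j dvd vm (vm v V) T $ j"
    proof (intro allI impI)
      fix j assume j: "j < m"
      have a: "\<forall>i<m. ?s j dvd (M1*W)$$(i,j)" using MW j by blast
      show "?s j dvd vm (vm v V) T $ j" unfolding eq by (rule vm_zero[OF d mult_carrier_mat[OF M1 W] a j])
    qed
  next
    assume a: "\<forall>j<m. ?s j dvd vm (vm v V) T $ j"
    have "\<forall>j<m. ?s j dvd vm v V $ j"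
      by (rule pigeon[OF pos T _ _ _ _ a, of "Z * V"]) (use Z V STd AT ZW v in auto)
    then show "vm v V \<in> row_lattice S" unfolding L using V by simp
  qed
  then show ?thesis unfolding step1 vW .
qed


lemma dvd_cong2: "(s::int) dvd a' - a \<Longrightarrow> s dvd b' - b \<Longrightarrow> (s dvd a' - b' \<longleftrightarrow> s dvd a - b)"
proof -
  assume h: "s dvd a' - a" "s dvd b' - b"
  have e: "a' - b' = (a - b) + ((a' - a) - (b' - b))" by simp
  have "s dvd (a' - a) - (b' - b)" using h by (rule dvd_diff)
  then show ?thesis unfolding e by (rule dvd_add_left_iff)
qed

lemma colmod_cong:
  assumes "A \<in> carrier_mat k m" "i < k" "j < m"
  shows "S$$(j,j) dvd colmod A S $$ (i,j) - A $$ (i,j)"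
  using assms unfolding colmod_def by (auto simp: mod_eq_dvd_iff[symmetric])

theorem mainTheorem5:
  fixes M1 M2 F S W :: "int mat" and m l2 n :: nat
  assumes "M1 \<in> carrier_mat m m" and "det M1 \<noteq> 0"
    and "M2 \<in> carrier_mat l2 m"
    and "F \<in> carrier_mat n m"
    and "smith_massager M1 S W"
  shows "relations_lattice (stack_mat M1 M2) F =
         relations_lattice (stack_mat S (colmod (M2 * W) S)) (colmod (F * W) S)"
proof -
  note M1 = assms(1) and M2 = assms(3) and F = assms(4)
  obtain m' where sm: "M1 \<in> carrier_mat m' m'" "is_smith_form_of S M1" "W \<in> carrier_mat m' m'"
    "cong_mod_mat (M1 * W) (0\<^sub>m m' m') S" "\<exists>Z\<in>carrier_mat m' m'. cong_mod_mat (Z * W) (1\<^sub>m m') S"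
    using assms(5) unfolding smith_massager_def by blast
  have mm: "m' = m" using sm(1) M1 by auto
  obtain m'' U V where sf: "M1 \<in> carrier_mat m'' m''" "S \<in> carrier_mat m'' m''" "smith_form S"
    "unimodular m'' U" "unimodular m'' V" "S = U * M1 * V"
    using sm(2) unfolding is_smith_form_of_def by blast
  have mm2: "m'' = m" using sf(1) M1 by auto
  have S: "S \<in> carrier_mat m m" using sf(2) mm2 by simp
  have D: "diagonal_mat S" using sf(3) unfolding smith_form_def by simp
  have W: "W \<in> carrier_mat m m" using sm(3) mm by simp
  have U: "U \<in> carrier_mat m m" and dU: "det U \<noteq> 0"
    using sf(4) mm2 unfolding unimodular_def by auto
  have V: "V \<in> carrier_mat m m" and dV: "det V \<noteq> 0"
    using sf(5) mm2 unfolding unimodular_def by auto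
  have SUMV: "S = U * M1 * V" by (rule sf(6))
  have "det S = det U * det M1 * det V"
    unfolding SUMV using det_mult[OF mult_carrier_mat[OF U M1] V] det_mult[OF U M1] by simp
  then have dS: "det S \<noteq> 0" using dU dV assms(2) by simp
  have ut: "upper_triangular S" using D S unfolding diagonal_mat_def upper_triangular_def by auto
  have pos: "\<forall>j<m. S$$(j,j) > 0"
  proof (intro allI impI)
    fix j assume j: "j < m"
    have ge: "S$$(j,j) \<ge> 0" using sf(3) S j unfolding smith_form_def by auto
    have "S$$(j,j) \<noteq> 0"
    proof
      assume z: "S$$(j,j) = 0"
      have "S$$(j,j) \<in> set (diag_mat S)" using S j unfolding diag_mat_def by auto
      then have "prod_list (diag_mat S) = 0" using z by (simp add: prod_list_zero_iff)
      then show False using dS det_upper_triangular[OF ut S] by simp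
    qed
    then show "S$$(j,j) > 0" using ge by simp
  qed
  obtain Ui where Ui: "Ui \<in> carrier_mat m m" "Ui * U = 1\<^sub>m m" using unimod_inv[OF sf(4)] mm2 by auto
  obtain Vi where Vi: "Vi \<in> carrier_mat m m" "V * Vi = 1\<^sub>m m" using unimod_inv[OF sf(5)] mm2 by auto
  obtain Z where Z: "Z \<in> carrier_mat m m" "cong_mod_mat (Z * W) (1\<^sub>m m) S" using sm(5) mm by auto
  have MW: "\<forall>i<m. \<forall>j<m. S$$(j,j) dvd (M1*W)$$(i,j)"
    using sm(4) mm cong_mod_char[OF S D, of "M1 * W" m "0\<^sub>m m m"] M1 W by auto
  have ZW: "\<forall>i<m. \<forall>j<m. S$$(j,j) dvd (Z*W)$$(i,j) - (if i = j then 1 else 0)"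
    using Z(2) cong_mod_char[OF S D, of "Z * W" m "1\<^sub>m m"] Z(1) W by auto
  have K: "v \<in> row_lattice M1 \<longleftrightarrow> (\<forall>j<m. S$$(j,j) dvd vm v W $ j)" if "dim_vec v = m" for v
    by (rule key[OF M1 S D pos U Ui V Vi(1) Vi(2) SUMV W MW Z(1) ZW that])
  define FW' where "FW' = colmod (F * W) S"
  define MW' where "MW' = colmod (M2 * W) S"
  have FW': "FW' \<in> carrier_mat n m" unfolding FW'_def colmod_def using F W by auto
  have MW': "MW' \<in> carrier_mat l2 m" unfolding MW'_def colmod_def using M2 W by auto
  have FWc: "F * W \<in> carrier_mat n m" using F W by simp
  have MWc: "M2 * W \<in> carrier_mat l2 m" using M2 W by simp
  have LHS: "p \<in> relations_lattice (stack_mat M1 M2) F \<longleftrightarrow> dim_vec p = n \<and>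
      (\<exists>b. dim_vec b = l2 \<and> (\<forall>j<m. S$$(j,j) dvd vm p (F*W) $ j - vm b (M2*W) $ j))" for p
  proof (cases "dim_vec p = n")
    case False
    then show ?thesis unfolding relations_lattice_def using F by auto
  next
    case True
    define x where "x = vm p F"
    have x: "dim_vec x = m" unfolding x_def using F by simp
    have "p \<in> relations_lattice (stack_mat M1 M2) F \<longleftrightarrow> x \<in> row_lattice (stack_mat M1 M2)"
      unfolding relations_lattice_def x_def vm_def using True F by simp
    also have "\<dots> \<longleftrightarrow> (\<exists>b. dim_vec b = l2 \<and> x - vm b M2 \<in> row_lattice M1)"
      unfolding stack_lattice[OF M1 M2]
    proof
      assume "\<exists>a b. dim_vec a = m \<and> dim_vec b = l2 \<and> x = vm a M1 + vm b M2"
      then obtain a b where ab: "dim_vec a = m" "dim_vec b = l2" "x = vm a M1 + vm b M2" by auto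
      have "x - vm b M2 = vm a M1" using ab M1 M2 by (intro eq_vecI) auto
      then show "\<exists>b. dim_vec b = l2 \<and> x - vm b M2 \<in> row_lattice M1"
        using ab M1 unfolding row_lattice_vm by auto
    next
      assume "\<exists>b. dim_vec b = l2 \<and> x - vm b M2 \<in> row_lattice M1"
      then obtain a b where ab: "dim_vec a = m" "dim_vec b = l2" "x - vm b M2 = vm a M1"
        using M1 unfolding row_lattice_vm by auto
      have "x = vm a M1 + vm b M2"
      proof (rule eq_vecI)
        fix j assume "j < dim_vec (vm a M1 + vm b M2)"
        then have j: "j < m" using M2 by simp
        have "(x - vm b M2) $ j = vm a M1 $ j" using ab(3) by simp
        then show "x $ j = (vm a M1 + vm b M2) $ j" using j x M1 M2 by simp
      qed (use x M1 M2 in simp)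
      then show "\<exists>a b. dim_vec a = m \<and> dim_vec b = l2 \<and> x = vm a M1 + vm b M2" using ab by auto
    qed
    also have "\<dots> \<longleftrightarrow> (\<exists>b. dim_vec b = l2 \<and> (\<forall>j<m. S$$(j,j) dvd vm p (F*W) $ j - vm b (M2*W) $ j))"
    proof -
      have "x - vm b M2 \<in> row_lattice M1 \<longleftrightarrow> (\<forall>j<m. S$$(j,j) dvd vm p (F*W) $ j - vm b (M2*W) $ j)"
        if b: "dim_vec b = l2" for b
      proof -
        have d: "dim_vec (x - vm b M2) = m" using x M2 by simp
        have e: "vm (x - vm b M2) W = vm p (F*W) - vm b (M2*W)"
          using vm_diff_vec[OF x _ W, of "vm b M2"] M2 b x F W True unfolding x_def
          by (simp add: vm_mult)
        show ?thesis unfolding K[OF d] e using F M2 W by auto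
      qed
      then show ?thesis by auto
    qed
    finally show ?thesis using True by simp
  qed
  have RHS: "p \<in> relations_lattice (stack_mat S MW') FW' \<longleftrightarrow> dim_vec p = n \<and>
      (\<exists>b. dim_vec b = l2 \<and> (\<forall>j<m. S$$(j,j) dvd vm p FW' $ j - vm b MW' $ j))" for p
  proof (cases "dim_vec p = n")
    case False
    then show ?thesis unfolding relations_lattice_def using FW' by auto
  next
    case True
    define x where "x = vm p FW'"
    have x: "dim_vec x = m" unfolding x_def using FW' by simp
    have "p \<in> relations_lattice (stack_mat S MW') FW' \<longleftrightarrow> x \<in> row_lattice (stack_mat S MW')"
      unfolding relations_lattice_def x_def vm_def using True FW' by simp
    also have "\<dots> \<longleftrightarrow> (\<exists>b. dim_vec b = l2 \<and> (\<forall>j<m. S$$(j,j) dvd x $ j - vm b MW' $ j))"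
      unfolding stack_lattice[OF S MW']
    proof
      assume "\<exists>a b. dim_vec a = m \<and> dim_vec b = l2 \<and> x = vm a S + vm b MW'"
      then obtain a b where ab: "dim_vec a = m" "dim_vec b = l2" "x = vm a S + vm b MW'" by auto
      have "vm a S \<in> row_lattice S" unfolding row_lattice_vm using ab S by auto
      then have "\<forall>j<m. S$$(j,j) dvd vm a S $ j" unfolding diag_lattice[OF S D] by simp
      then show "\<exists>b. dim_vec b = l2 \<and> (\<forall>j<m. S$$(j,j) dvd x $ j - vm b MW' $ j)"
        using ab S MW' by auto
    next
      assume "\<exists>b. dim_vec b = l2 \<and> (\<forall>j<m. S$$(j,j) dvd x $ j - vm b MW' $ j)"
      then obtain b where b: "dim_vec b = l2" "\<forall>j<m. S$$(j,j) dvd x $ j - vm b MW' $ j" by auto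
      have "x - vm b MW' \<in> row_lattice S" unfolding diag_lattice[OF S D] using b x MW' by auto
      then obtain a where a: "dim_vec a = m" "x - vm b MW' = vm a S"
        using S unfolding row_lattice_vm by auto
      have "x = vm a S + vm b MW'"
      proof (rule eq_vecI)
        fix j assume "j < dim_vec (vm a S + vm b MW')"
        then have j: "j < m" using MW' by simp
        have "(x - vm b MW') $ j = vm a S $ j" using a(2) by simp
        then show "x $ j = (vm a S + vm b MW') $ j" using j x S MW' by simp
      qed (use x S MW' in simp)
      then show "\<exists>a b. dim_vec a = m \<and> dim_vec b = l2 \<and> x = vm a S + vm b MW'" using a b by auto
    qed
    finally show ?thesis using True unfolding x_def by simp
  qed
  have "p \<in> relations_lattice (stack_mat M1 M2) F \<longleftrightarrow>
        p \<in> relations_lattice (stack_mat S (colmod (M2 * W) S)) (colmod (F * W) S)" for p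
  proof -
    have "(\<forall>j<m. S$$(j,j) dvd vm p FW' $ j - vm b MW' $ j) \<longleftrightarrow>
          (\<forall>j<m. S$$(j,j) dvd vm p (F*W) $ j - vm b (M2*W) $ j)"
      if p: "dim_vec p = n" and b: "dim_vec b = l2" for b
    proof -
      have "S$$(j,j) dvd vm p FW' $ j - vm b MW' $ j \<longleftrightarrow>
            S$$(j,j) dvd vm p (F*W) $ j - vm b (M2*W) $ j" if j: "j < m" for j
      proof (rule dvd_cong2)
        show "S$$(j,j) dvd vm p FW' $ j - vm p (F*W) $ j"
          using vm_diff_mat[OF p FW' FWc _ j] colmod_cong[OF FWc _ j] unfolding FW'_def by auto
        show "S$$(j,j) dvd vm b MW' $ j - vm b (M2*W) $ j"
          using vm_diff_mat[OF b MW' MWc _ j] colmod_cong[OF MWc _ j] unfolding MW'_def by auto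
      qed
      then show ?thesis by auto
    qed
    note bi = this
    have ee: "p \<in> relations_lattice (stack_mat S (colmod (M2 * W) S)) (colmod (F * W) S) \<longleftrightarrow>
       p \<in> relations_lattice (stack_mat S MW') FW'" unfolding FW'_def MW'_def ..
    show ?thesis unfolding ee LHS RHS using bi by auto
  qed
  then show ?thesis by blast
qed

end
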